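(* Fix $\mu\in\mathcal P$ and subspaces $\bar X^R,\bar X^R_{(1)},\bar X^R_{(2)},\bar X^R_{(3)}\subset\bar X$. Let $\bar u\in\bar X$ satisfy $\bar a(\bar u,v)=\bar f(v)$ $\forall v\in\bar X$; $\bar u^R\in\bar X^R$ satisfy $\bar a(\bar u^R,v)=\bar f(v)$ $\forall v\in\bar X^R$; and let $\bar u^R_{(1)}\in\bar X^R_{(1)}$ satisfy $\bar a(v,\bar u^R_{(1)})=-\bar l(v)$ $\forall v\in\bar X^R_{(1)}$, $\bar u^R_{(2)}\in\bar X^R_{(2)}$ satisfy $\bar a(v,\bar u^R_{(2)})=-2E[l(\bar u^R)l(v)]$ $\forall v\in\bar X^R_{(2)}$, $\bar u^R_{(3)}\in\bar X^R_{(3)}$ satisfy $\bar a(v,\bar u^R_{(3)})=-2\big(\bar l(\bar u^R)-\bar r(\bar u^R_{(1)})\big)\bar l(v)$ $\forall v\in\bar X^R_{(3)}$. Define residuals $\bar r(\cdot):=\bar f(\cdot)-\bar a(\bar u^R,\cdot)$, $\bar r_{(1)}(\cdot):=-\bar l(\cdot)-\bar a(\cdot,\bar u^R_{(1)})$, $\bar r_{(2)}(\cdot):=-2E[l(\bar u^R)l(\cdot)]-\bar a(\cdot,\bar u^R_{(2)})$, $\bar r_{(3)}(\cdot):=-2\big(\bar l(\bar u^R)-\bar r(\bar u^R_{(1)})\big)\bar l(\cdot)-\bar a(\cdot,\bar u^R_{(3)})$. Then \[ \big|V[l(\bar u)]-V[l(\bar u^R)]-\bar r(\bar u^R_{(1)})^2+\bar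 r(\bar u^R_{(2)})-\bar r(\bar u^R_{(3)})\big| \le\frac{\bar\gamma_{(2)}\|\bar r\|_{\bar X'}^2}{\bar\alpha^2}+\frac{\|\bar r\|_{\bar X'}^2\|\bar r_{(1)}\|_{\bar X'}^2}{\bar\alpha^2}+\frac{\|\bar r_{(2)}-\bar r_{(3)}\|_{\bar X'}\|\bar r\|_{\bar X'}}{\bar\alpha}. \]
   Context: Random vector $\xi=(\xi_1,\dots,\xi_K)$ of independent real random variables with image $\Xi\subset\mathbb R^K$ and joint density $p_\xi$; $E[g]:=\int_\Xi g(y)p_\xi(y)\,dy$ and $V[g]:=E[(g-E[g])^2]$. $X$ is a real separable Hilbert space, $S\subset L^2_\xi(\Xi)$ a finite-dimensional subspace, and $\bar X:=S\otimes X$ with the norm of $L^2_\xi(\Xi;X)$, $\|v\|_{\bar X}^2=\int_\Xi\|v(y)\|_X^2p_\xi(y)dy$. For $(y,\mu)\in\Xi\times\mathcal P$, $a(\cdot,\cdot;y,\mu)$ is a bilinear form on $X$ bounded and coercive uniformly in $(y,\mu)$; $f(\cdot;y,\mu)$ and $l(\cdot;y,\mu)$ are linear forms on $X$ bounded uniformly in $(y,\mu)$ (measurable in $y$). For $w,v\in\bar X$ (suppressing $\mu$): $\bar a(w,v):=E[a(w(\cdot),v(\cdot);\cdot,\mu)]$, $\bar f(v):=E[f(v(\cdot);\cdot,\mu)]$, $\bar l(v):=E[l(v(\cdot);\cdot,\mu)]$, and $l(v)$ denotes the function $y\mapsto l(v(y);y,\mu)$, so e.g. $E[l(w)l(v)]=\int_\Xi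 l(w(y);y,\mu)l(v(y);y,\mu)p_\xi(y)dy$. Coercivity factor $\bar\alpha:=\inf_{v\in\bar X\setminus\{0\}}\bar a(v,v)/\|v\|_{\bar X}^2$; continuity factor $\bar\gamma_{(2)}:=\sup_{w,v\in\bar X\setminus\{0\}}E[l(w)l(v)]/(\|w\|_{\bar X}\|v\|_{\bar X})$. Dual norm $\|F\|_{\bar X'}:=\sup_{v\ne0}|F(v)|/\|v\|_{\bar X}$. *)

theory Defs
  imports "HOL-Analysis.Analysis"
begin

definition Ex :: "(real^'k::finite \<Rightarrow> real) \<Rightarrow> (real^'k) set \<Rightarrow> (real^'k \<Rightarrow> real) \<Rightarrow> real" where
  "Ex p Xi g = (LINT y:Xi|lborel. g y * p y)"

definition Var :: "(real^'k::finite \<Rightarrow> real) \<Rightarrow> (real^'k) set \<Rightarrow> (real^'k \<Rightarrow> real) \<Rightarrow> real" where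
  "Var p Xi g = Ex p Xi (\<lambda>y. (g y - Ex p Xi g)^2)"

definition normXb :: "(real^'k::finite \<Rightarrow> real) \<Rightarrow> (real^'k) set \<Rightarrow> (real^'k \<Rightarrow> 'x::real_normed_vector) \<Rightarrow> real" where
  "normXb p Xi v = sqrt (Ex p Xi (\<lambda>y. (norm (v y))^2))"

definition Sspace :: "nat \<Rightarrow> (nat \<Rightarrow> real^'k \<Rightarrow> real) \<Rightarrow> (real^'k \<Rightarrow> real) set" where
  "Sspace m b = {s. \<exists>c::nat \<Rightarrow> real. s = (\<lambda>y. \<Sum>i<m. c i * b i y)}"

text \<open>The tensor product space S \<otimes> X (algebraic = Hilbert tensor product, as S is
  finite dimensional): finite sums of s(y) x with s in S, x in X.\<close>
definition tensorSX :: "(real^'k \<Rightarrow> real) set \<Rightarrow> (real^'k \<Rightarrow> 'x::real_vector) set" where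
  "tensorSX S = {v. \<exists>(n::nat) (s::nat \<Rightarrow> real^'k \<Rightarrow> real) (x::nat \<Rightarrow> 'x).
       (\<forall>i<n. s i \<in> S) \<and> v = (\<lambda>y. \<Sum>i<n. s i y *\<^sub>R x i)}"

definition lin_subspace_of :: "('a \<Rightarrow> 'x::real_vector) set \<Rightarrow> ('a \<Rightarrow> 'x) set \<Rightarrow> bool" where
  "lin_subspace_of V W \<longleftrightarrow> V \<subseteq> W \<and> (\<lambda>y. 0) \<in> V \<and>
     (\<forall>v\<in>V. \<forall>w\<in>V. (\<lambda>y. v y + w y) \<in> V) \<and> (\<forall>c. \<forall>v\<in>V. (\<lambda>y. c *\<^sub>R v y) \<in> V)"

text \<open>Parametrized forms averaged over the randomness (mu fixed and suppressed).\<close>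
definition abar :: "(real^'k::finite \<Rightarrow> real) \<Rightarrow> (real^'k) set \<Rightarrow> ('x \<Rightarrow> 'x \<Rightarrow> real^'k \<Rightarrow> real)
    \<Rightarrow> (real^'k \<Rightarrow> 'x) \<Rightarrow> (real^'k \<Rightarrow> 'x) \<Rightarrow> real" where
  "abar p Xi a w v = Ex p Xi (\<lambda>y. a (w y) (v y) y)"

definition fbar :: "(real^'k::finite \<Rightarrow> real) \<Rightarrow> (real^'k) set \<Rightarrow> ('x \<Rightarrow> real^'k \<Rightarrow> real)
    \<Rightarrow> (real^'k \<Rightarrow> 'x) \<Rightarrow> real" where
  "fbar p Xi f v = Ex p Xi (\<lambda>y. f (v y) y)"

definition Ell :: "(real^'k::finite \<Rightarrow> real) \<Rightarrow> (real^'k) set \<Rightarrow> ('x \<Rightarrow> real^'k \<Rightarrow> real)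
    \<Rightarrow> (real^'k \<Rightarrow> 'x) \<Rightarrow> (real^'k \<Rightarrow> 'x) \<Rightarrow> real" where
  "Ell p Xi l w v = Ex p Xi (\<lambda>y. l (w y) y * l (v y) y)"

text \<open>Coercivity factor: infimum over the nonzero elements of Xbar (elements of
  L^2 norm zero are the zero class).\<close>
definition alpha_bar :: "(real^'k::finite \<Rightarrow> real) \<Rightarrow> (real^'k) set \<Rightarrow> (real^'k \<Rightarrow> 'x::real_normed_vector) set
    \<Rightarrow> ('x \<Rightarrow> 'x \<Rightarrow> real^'k \<Rightarrow> real) \<Rightarrow> real" where
  "alpha_bar p Xi Xb a = (INF v\<in>{v\<in>Xb. normXb p Xi v \<noteq> 0}. abar p Xi a v v / (normXb p Xi v)^2)"

definition gamma2_bar :: "(real^'k::finite \<Rightarrow> real) \<Rightarrow> (real^'k) set \<Rightarrow> (real^'k \<Rightarrow> 'x::real_normed_vector) set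
    \<Rightarrow> ('x \<Rightarrow> real^'k \<Rightarrow> real) \<Rightarrow> real" where
  "gamma2_bar p Xi Xb l = (SUP wv\<in>{v\<in>Xb. normXb p Xi v \<noteq> 0} \<times> {v\<in>Xb. normXb p Xi v \<noteq> 0}.
      Ell p Xi l (fst wv) (snd wv) / (normXb p Xi (fst wv) * normXb p Xi (snd wv)))"

text \<open>Dual norm on Xbar' (the 0 is inserted only so that the degenerate case
  Xbar = {0} gives 0; all quotients are nonnegative anyway).\<close>
definition dual_norm :: "(real^'k::finite \<Rightarrow> real) \<Rightarrow> (real^'k) set \<Rightarrow> (real^'k \<Rightarrow> 'x::real_normed_vector) set
    \<Rightarrow> ((real^'k \<Rightarrow> 'x) \<Rightarrow> real) \<Rightarrow> real" where
  "dual_norm p Xi Xb F = Sup (insert 0 ((\<lambda>v. \<bar>F v\<bar> / normXb p Xi v) ` {v\<in>Xb. normXb p Xi v \<noteq> 0}))"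

end

theory Submission
  imports Defs
begin


definition Gi :: "(real^'k::finite \<Rightarrow> real) \<Rightarrow> (real^'k) set \<Rightarrow> (real^'k \<Rightarrow> real) \<Rightarrow> bool" where
  "Gi p Xi g \<longleftrightarrow> set_integrable lborel Xi (\<lambda>y. g y * p y)"

lemma Gi_add: "Gi p Xi g \<Longrightarrow> Gi p Xi h \<Longrightarrow> Gi p Xi (\<lambda>y. g y + h y)"
  unfolding Gi_def by (simp add: distrib_right)
lemma Ex_add: "Gi p Xi g \<Longrightarrow> Gi p Xi h \<Longrightarrow> Ex p Xi (\<lambda>y. g y + h y) = Ex p Xi g + Ex p Xi h"
  unfolding Gi_def Ex_def by (simp add: distrib_right)
lemma Gi_diff: "Gi p Xi g \<Longrightarrow> Gi p Xi h \<Longrightarrow> Gi p Xi (\<lambda>y. g y - h y)"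
  unfolding Gi_def by (simp add: left_diff_distrib)
lemma Ex_diff: "Gi p Xi g \<Longrightarrow> Gi p Xi h \<Longrightarrow> Ex p Xi (\<lambda>y. g y - h y) = Ex p Xi g - Ex p Xi h"
  unfolding Gi_def Ex_def by (simp add: left_diff_distrib)
lemma Gi_cmult: "Gi p Xi g \<Longrightarrow> Gi p Xi (\<lambda>y. c * g y)"
  unfolding Gi_def by (simp add: mult.assoc)
lemma Ex_cmult: "Ex p Xi (\<lambda>y. c * g y) = c * Ex p Xi g"
  unfolding Ex_def by (simp add: mult.assoc)
lemma Gi_sum: "finite I \<Longrightarrow> (\<And>i. i \<in> I \<Longrightarrow> Gi p Xi (g i)) \<Longrightarrow> Gi p Xi (\<lambda>y. \<Sum>i\<in>I. g i y)"
proof (induction I rule: finite_induct)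
  case empty then show ?case by (simp add: Gi_def set_integrable_def)
next
  case (insert x F)
  then have "Gi p Xi (\<lambda>y. g x y + (\<Sum>i\<in>F. g i y))" by (intro Gi_add) auto
  then show ?case using insert by simp
qed
lemma Ex_sum: "finite I \<Longrightarrow> (\<And>i. i \<in> I \<Longrightarrow> Gi p Xi (g i)) \<Longrightarrow> Ex p Xi (\<lambda>y. \<Sum>i\<in>I. g i y) = (\<Sum>i\<in>I. Ex p Xi (g i))"
proof (induction I rule: finite_induct)
  case empty then show ?case by (simp add: Ex_def)
next
  case (insert x F)
  have "Ex p Xi (\<lambda>y. \<Sum>i\<in>insert x F. g i y) = Ex p Xi (\<lambda>y. g x y + (\<Sum>i\<in>F. g i y))"
    using insert by simp
  also have "\<dots> = Ex p Xi (g x) + Ex p Xi (\<lambda>y. \<Sum>i\<in>F. g i y)"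
    by (rule Ex_add) (use insert Gi_sum[where g=g and I=F] in auto)
  finally show ?case using insert by simp
qed
lemma Gi_cong: "Xi \<in> sets lborel \<Longrightarrow> (\<And>y. y \<in> Xi \<Longrightarrow> g y = h y) \<Longrightarrow> Gi p Xi g = Gi p Xi h"
  unfolding Gi_def by (rule set_integrable_cong) auto
lemma Ex_cong: "Xi \<in> sets lborel \<Longrightarrow> (\<And>y. y \<in> Xi \<Longrightarrow> g y = h y) \<Longrightarrow> Ex p Xi g = Ex p Xi h"
  unfolding Ex_def by (rule set_lebesgue_integral_cong) auto
lemma Ex_mono: "\<forall>y. 0 \<le> p y \<Longrightarrow> Gi p Xi g \<Longrightarrow> Gi p Xi h \<Longrightarrow> (\<And>y. y \<in> Xi \<Longrightarrow> g y \<le> h y) \<Longrightarrow> Ex p Xi g \<le> Ex p Xi h"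
  unfolding Ex_def Gi_def by (rule set_integral_mono) (auto intro: mult_right_mono)
lemma Ex_nonneg: "\<forall>y. 0 \<le> p y \<Longrightarrow> (\<And>y. y \<in> Xi \<Longrightarrow> 0 \<le> g y) \<Longrightarrow> 0 \<le> Ex p Xi g"
  unfolding Ex_def set_lebesgue_integral_def
  by (rule Bochner_Integration.integral_nonneg) (auto simp: indicator_def intro!: mult_nonneg_nonneg)
lemma Gi_abs: "\<forall>y. 0 \<le> p y \<Longrightarrow> Gi p Xi g \<Longrightarrow> Gi p Xi (\<lambda>y. \<bar>g y\<bar>)"
  unfolding Gi_def using set_integrable_abs[of lborel Xi "\<lambda>y. g y * p y"]
  by (simp add: abs_mult)

lemma amgm_lim:
  fixes X A B :: real
  assumes h: "\<forall>t>0. X \<le> (t*A + B/t)/2" and A: "A \<ge> 0" and B: "B \<ge> 0"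
  shows "X \<le> sqrt A * sqrt B"
proof (cases "X \<le> 0")
  case True
  have "0 \<le> sqrt A * sqrt B" using A B by simp
  then show ?thesis using True by linarith
next
  case False
  then have X: "X > 0" by simp
  show ?thesis
  proof (cases "A = 0")
    case True
    define t where "t = B/X + 1"
    have t: "t > 0" using B X by (simp add: t_def add_nonneg_pos)
    have "X \<le> B/t/2" using h t True by auto
    moreover have "B/t/2 < X"
    proof -
      have "B < 2*t*X" using B X by (simp add: t_def field_simps add_nonneg_pos)
      then show ?thesis using t by (simp add: field_simps)
    qed
    ultimately show ?thesis by simp
  next
    case A0: False
    show ?thesis
    proof (cases "B = 0")
      case True
      define t where "t = X/(A+1)"
      have t: "t > 0" using A X by (simp add: t_def)
      have "X \<le> t*A/2" using h t True by auto
      moreover have "t*A/2 < X"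
      proof -
        have "X*A < X*(A+1)*2" using A X by (simp add: field_simps add_nonneg_pos)
        then show ?thesis using A by (simp add: t_def field_simps)
      qed
      ultimately show ?thesis by simp
    next
      case B0: False
      have Ap: "A > 0" "B > 0" using A B A0 B0 by auto
      define t where "t = sqrt B / sqrt A"
      have t: "t > 0" using Ap by (simp add: t_def)
      have "t * A = sqrt A * sqrt B" using Ap
        by (simp add: t_def field_simps)
      moreover have "B / t = sqrt A * sqrt B" using Ap
        by (simp add: t_def field_simps)
      ultimately show ?thesis using h t by auto
    qed
  qed
qed

lemma Ex_abs_le: "\<forall>y. 0 \<le> p y \<Longrightarrow> Gi p Xi g \<Longrightarrow> \<bar>Ex p Xi g\<bar> \<le> Ex p Xi (\<lambda>y. \<bar>g y\<bar>)"
proof -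
  assume p: "\<forall>y. 0 \<le> p y" and g: "Gi p Xi g"
  have "Ex p Xi g \<le> Ex p Xi (\<lambda>y. \<bar>g y\<bar>)" by (rule Ex_mono) (use p g Gi_abs in auto)
  moreover have "Ex p Xi (\<lambda>y. (-1) * g y) \<le> Ex p Xi (\<lambda>y. \<bar>g y\<bar>)"
    by (rule Ex_mono) (use p g Gi_abs Gi_cmult[of p Xi g "-1"] in auto)
  ultimately show ?thesis unfolding Ex_cmult by linarith
qed

lemma Ex_CS:
  assumes p: "\<forall>y. 0 \<le> p y" and g: "Gi p Xi g"
    and phi: "Gi p Xi (\<lambda>y. (\<phi> y)^2)" and psi: "Gi p Xi (\<lambda>y. (\<psi> y)^2)"
    and bd: "\<And>y. y \<in> Xi \<Longrightarrow> \<bar>g y\<bar> \<le> K * \<phi> y * \<psi> y"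
    and pos: "\<And>y. y \<in> Xi \<Longrightarrow> 0 \<le> \<phi> y" "\<And>y. y \<in> Xi \<Longrightarrow> 0 \<le> \<psi> y"
    and K: "K \<ge> 0"
  shows "\<bar>Ex p Xi g\<bar> \<le> K * sqrt (Ex p Xi (\<lambda>y. (\<phi> y)^2)) * sqrt (Ex p Xi (\<lambda>y. (\<psi> y)^2))"
proof -
  define A where "A = Ex p Xi (\<lambda>y. (\<phi> y)^2)"
  define B where "B = Ex p Xi (\<lambda>y. (\<psi> y)^2)"
  have A: "A \<ge> 0" unfolding A_def by (rule Ex_nonneg) (use p in auto)
  have B: "B \<ge> 0" unfolding B_def by (rule Ex_nonneg) (use p in auto)
  have "\<forall>t>0. \<bar>Ex p Xi g\<bar> \<le> (t*(K*A) + (K*B)/t)/2"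
  proof (intro allI impI)
    fix t :: real assume t: "t > 0"
    have "\<bar>Ex p Xi g\<bar> \<le> Ex p Xi (\<lambda>y. \<bar>g y\<bar>)" by (rule Ex_abs_le[OF p g])
    also have "\<dots> \<le> Ex p Xi (\<lambda>y. (t*K/2) * (\<phi> y)^2 + (K/(2*t)) * (\<psi> y)^2)"
    proof (rule Ex_mono[OF p])
      show "Gi p Xi (\<lambda>y. \<bar>g y\<bar>)" by (rule Gi_abs[OF p g])
      show "Gi p Xi (\<lambda>y. t * K / 2 * (\<phi> y)\<^sup>2 + K / (2 * t) * (\<psi> y)\<^sup>2)"
        by (intro Gi_add Gi_cmult phi psi)
      fix y assume y: "y \<in> Xi"
      have "2 * t * (\<phi> y * \<psi> y) \<le> t*t*(\<phi> y)^2 + (\<psi> y)^2"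
        using zero_le_power2[of "t * \<phi> y - \<psi> y"]
        by (simp add: power2_eq_square algebra_simps)
      then have "\<phi> y * \<psi> y \<le> (t/2)*(\<phi> y)^2 + (1/(2*t))*(\<psi> y)^2"
        using t by (simp add: field_simps)
      then have "K * (\<phi> y * \<psi> y) \<le> K * ((t/2)*(\<phi> y)^2 + (1/(2*t))*(\<psi> y)^2)"
        using K by (intro mult_left_mono)
      then show "\<bar>g y\<bar> \<le> t * K / 2 * (\<phi> y)\<^sup>2 + K / (2 * t) * (\<psi> y)\<^sup>2"
        using bd[OF y] by (simp add: algebra_simps)
    qed
    also have "\<dots> = (t*K/2) * A + (K/(2*t)) * B"
      unfolding A_def B_def by (subst Ex_add) (intro Gi_cmult phi psi, intro Gi_cmult phi psi, simp only: Ex_cmult)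
    also have "\<dots> = (t*(K*A) + (K*B)/t)/2" by (simp add: field_simps)
    finally show "\<bar>Ex p Xi g\<bar> \<le> (t*(K*A) + (K*B)/t)/2" .
  qed
  then have "\<bar>Ex p Xi g\<bar> \<le> sqrt (K*A) * sqrt (K*B)"
    by (rule amgm_lim) (use A B K in auto)
  also have "\<dots> = K * sqrt A * sqrt B" using K
    by (simp add: real_sqrt_mult)
  finally show ?thesis unfolding A_def B_def .
qed

lemma Gi_base:
  fixes b :: "nat \<Rightarrow> real^'k::finite \<Rightarrow> real"
  assumes p_meas: "p \<in> borel_measurable borel" and p_nonneg: "\<forall>y. 0 \<le> p y"
    and p_int: "set_integrable lborel Xi p"
    and b_L2: "\<forall>i<m. set_integrable lborel Xi (\<lambda>y. (b i y)^2 * p y)"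
    and phim: "\<phi> \<in> borel_measurable borel" and phib: "\<forall>y. \<bar>\<phi> y\<bar> \<le> (\<Sum>i<m. (b i y)^2) + 1"
    and hm: "set_borel_measurable lborel Xi h" and hb: "\<forall>y\<in>Xi. \<bar>h y\<bar> \<le> K"
  shows "Gi p Xi (\<lambda>y. \<phi> y * h y)"
proof -
  have dom: "Gi p Xi (\<lambda>y. \<bar>K\<bar> * ((\<Sum>i<m. (b i y)^2) + 1))"
  proof (intro Gi_cmult Gi_add Gi_sum)
    show "Gi p Xi (\<lambda>y. (b i y)^2)" if "i \<in> {..<m}" for i using b_L2 that by (simp add: Gi_def)
    show "Gi p Xi (\<lambda>y. 1)" using p_int by (simp add: Gi_def)
  qed simp
  show ?thesis unfolding Gi_def
  proof (rule set_integrable_bound)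
    show "set_integrable lborel Xi (\<lambda>y. \<bar>K\<bar> * ((\<Sum>i<m. (b i y)^2) + 1) * p y)"
      using dom by (simp add: Gi_def)
    have "(\<lambda>y. indicator Xi y *\<^sub>R (\<phi> y * h y * p y)) = (\<lambda>y. (\<phi> y * p y) * (indicator Xi y *\<^sub>R h y))"
      by (auto simp: fun_eq_iff)
    moreover have "(\<lambda>y. (\<phi> y * p y) * (indicator Xi y *\<^sub>R h y)) \<in> borel_measurable lborel"
      using hm phim p_meas unfolding set_borel_measurable_def by measurable
    ultimately show "set_borel_measurable lborel Xi (\<lambda>y. \<phi> y * h y * p y)"
      unfolding set_borel_measurable_def by simp
    show "AE x in lborel. x \<in> Xi \<longrightarrow> norm (\<phi> x * h x * p x) \<le> norm (\<bar>K\<bar> * ((\<Sum>i<m. (b i x)^2) + 1) * p x)"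
    proof (rule AE_I2, rule impI)
      fix x assume x: "x \<in> Xi"
      have s: "0 \<le> (\<Sum>i<m. (b i x)^2) + 1" by (simp add: sum_nonneg add_nonneg_nonneg)
      have "\<bar>\<phi> x\<bar> * \<bar>h x\<bar> \<le> ((\<Sum>i<m. (b i x)^2) + 1) * \<bar>K\<bar>"
        using phib hb x s by (intro mult_mono) auto
      then have "\<bar>\<phi> x\<bar> * \<bar>h x\<bar> * p x \<le> ((\<Sum>i<m. (b i x)^2) + 1) * \<bar>K\<bar> * p x"
        using p_nonneg by (intro mult_right_mono) auto
      then show "norm (\<phi> x * h x * p x) \<le> norm (\<bar>K\<bar> * ((\<Sum>i<m. (b i x)^2) + 1) * p x)"
        using p_nonneg s by (simp add: abs_mult mult_ac)
    qed
  qed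
qed

locale wset =
  fixes p :: "real^'k::finite \<Rightarrow> real" and Xi :: "(real^'k) set"
    and m :: nat and b :: "nat \<Rightarrow> real^'k \<Rightarrow> real"
  assumes Xi_meas[measurable]: "Xi \<in> sets lborel"
    and p_meas[measurable]: "p \<in> borel_measurable borel"
    and p_nonneg: "\<forall>y. 0 \<le> p y"
    and p_int: "set_integrable lborel Xi p"
    and p_prob: "(LINT y:Xi|lborel. p y) = 1"
    and b_meas: "\<forall>i<m. b i \<in> borel_measurable borel"
    and b_L2: "\<forall>i<m. set_integrable lborel Xi (\<lambda>y. (b i y)^2 * p y)"
begin

lemma sumsq_ge: "i < m \<Longrightarrow> (b i y)^2 \<le> (\<Sum>j<m. (b j y)^2)"
  by (rule member_le_sum[of i "{..<m}" "\<lambda>j. (b j y)^2", simplified]) auto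

lemma phi_bb: "j < m \<Longrightarrow> k < m \<Longrightarrow> \<bar>b j y * b k y\<bar> \<le> (\<Sum>i<m. (b i y)^2) + 1"
proof -
  assume j: "j < m" and k: "k < m"
  have "\<bar>b j y * b k y\<bar> \<le> max ((b j y)^2) ((b k y)^2)"
  proof (cases "\<bar>b j y\<bar> \<le> \<bar>b k y\<bar>")
    case True
    then have "\<bar>b j y\<bar> * \<bar>b k y\<bar> \<le> \<bar>b k y\<bar> * \<bar>b k y\<bar>" by (intro mult_right_mono) auto
    then show ?thesis by (simp add: abs_mult power2_eq_square)
  next
    case False
    then have "\<bar>b j y\<bar> * \<bar>b k y\<bar> \<le> \<bar>b j y\<bar> * \<bar>b j y\<bar>" by (intro mult_left_mono) auto
    then show ?thesis by (simp add: abs_mult power2_eq_square)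
  qed
  also have "\<dots> \<le> (\<Sum>i<m. (b i y)^2)" using sumsq_ge[OF j] sumsq_ge[OF k] by simp
  finally show ?thesis by simp
qed

lemma phi_b: "j < m \<Longrightarrow> \<bar>b j y\<bar> \<le> (\<Sum>i<m. (b i y)^2) + 1"
proof -
  assume j: "j < m"
  have "\<bar>b j y\<bar> \<le> (b j y)^2 + 1"
  proof (cases "\<bar>b j y\<bar> \<le> 1")
    case True then show ?thesis by (simp add: add_increasing)
  next
    case False
    then have "\<bar>b j y\<bar> * 1 \<le> \<bar>b j y\<bar> * \<bar>b j y\<bar>" by (intro mult_left_mono) auto
    then show ?thesis by (simp add: power2_eq_square abs_mult)
  qed
  then show ?thesis using sumsq_ge[OF j, of y] by simp
qed

lemma phi_1: "\<bar>1::real\<bar> \<le> (\<Sum>i<m. (b i y)^2) + 1"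
  by (simp add: sum_nonneg)

lemma Gi_bilin:
  fixes B :: "'x::real_normed_vector \<Rightarrow> 'z::real_normed_vector \<Rightarrow> real^'k \<Rightarrow> real"
  assumes bb: "\<forall>y\<in>Xi. bounded_bilinear (\<lambda>x z. B x z y)"
    and Bm: "\<forall>x z. set_borel_measurable lborel Xi (\<lambda>y. B x z y)"
    and Bb: "\<forall>y\<in>Xi. \<forall>x z. \<bar>B x z y\<bar> \<le> C * norm x * norm z"
  shows "Gi p Xi (\<lambda>y. B (\<Sum>j<m. b j y *\<^sub>R w j) (\<Sum>k<m. b k y *\<^sub>R v k) y)"
proof -
  have "Gi p Xi (\<lambda>y. \<Sum>j<m. \<Sum>k<m. (b j y * b k y) * B (w j) (v k) y)"
  proof (intro Gi_sum)
    fix j k assume j: "j \<in> {..<m}" and k: "k \<in> {..<m}"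
    show "Gi p Xi (\<lambda>y. (b j y * b k y) * B (w j) (v k) y)"
    proof (rule Gi_base[where m=m and b=b and K="C * norm (w j) * norm (v k)"])
      show "(\<lambda>y. b j y * b k y) \<in> borel_measurable borel" using b_meas j k by (intro borel_measurable_times) auto
      show "\<forall>y. \<bar>b j y * b k y\<bar> \<le> (\<Sum>i<m. (b i y)\<^sup>2) + 1" using phi_bb j k by simp
      show "set_borel_measurable lborel Xi (\<lambda>y. B (w j) (v k) y)" using Bm by blast
      show "\<forall>y\<in>Xi. \<bar>B (w j) (v k) y\<bar> \<le> C * norm (w j) * norm (v k)" using Bb by blast
    qed (rule p_meas p_nonneg p_int b_L2)+
  qed auto
  moreover have "B (\<Sum>j<m. b j y *\<^sub>R w j) (\<Sum>k<m. b k y *\<^sub>R v k) y = (\<Sum>j<m. \<Sum>k<m. (b j y * b k y) * B (w j) (v k) y)"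
    if y: "y \<in> Xi" for y
  proof -
    interpret BB: bounded_bilinear "\<lambda>x z. B x z y" using bb y by auto
    show ?thesis
      apply (simp add: BB.sum_left BB.sum_right BB.scaleR_left BB.scaleR_right sum_distrib_left)
      apply (subst sum.swap)
      apply (simp add: mult_ac)
      done
  qed
  ultimately show ?thesis by (subst Gi_cong[OF Xi_meas]) auto
qed

lemma Gi_lin:
  fixes F :: "'x::real_normed_vector \<Rightarrow> real^'k \<Rightarrow> real"
  assumes bl: "\<forall>y\<in>Xi. bounded_linear (\<lambda>x. F x y)"
    and Fm: "\<forall>x. set_borel_measurable lborel Xi (\<lambda>y. F x y)"
    and Fb: "\<forall>y\<in>Xi. \<forall>x. \<bar>F x y\<bar> \<le> C * norm x"
  shows "Gi p Xi (\<lambda>y. F (\<Sum>j<m. b j y *\<^sub>R v j) y)"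
proof -
  have "Gi p Xi (\<lambda>y. \<Sum>j<m. b j y * F (v j) y)"
  proof (intro Gi_sum)
    fix j assume j: "j \<in> {..<m}"
    show "Gi p Xi (\<lambda>y. b j y * F (v j) y)"
    proof (rule Gi_base[where m=m and b=b and K="C * norm (v j)"])
      show "b j \<in> borel_measurable borel" using b_meas j by auto
      show "\<forall>y. \<bar>b j y\<bar> \<le> (\<Sum>i<m. (b i y)\<^sup>2) + 1" using phi_b j by simp
      show "set_borel_measurable lborel Xi (\<lambda>y. F (v j) y)" using Fm by blast
      show "\<forall>y\<in>Xi. \<bar>F (v j) y\<bar> \<le> C * norm (v j)" using Fb by blast
    qed (rule p_meas p_nonneg p_int b_L2)+
  qed auto
  moreover have "F (\<Sum>j<m. b j y *\<^sub>R v j) y = (\<Sum>j<m. b j y * F (v j) y)"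
    if y: "y \<in> Xi" for y
  proof -
    interpret L: bounded_linear "\<lambda>x. F x y" using bl y by auto
    show ?thesis by (simp add: L.sum L.scaleR)
  qed
  ultimately show ?thesis by (subst Gi_cong[OF Xi_meas]) auto
qed

lemma Gi_one: "Gi p Xi (\<lambda>y. 1)"
  using p_int by (simp add: Gi_def)

lemma Ex_one: "Ex p Xi (\<lambda>y. 1) = 1"
  using p_prob by (simp add: Ex_def)

lemma Var_eq:
  assumes "Gi p Xi L" "Gi p Xi (\<lambda>y. L y * L y)"
  shows "Var p Xi L = Ex p Xi (\<lambda>y. L y * L y) - (Ex p Xi L)^2"
proof -
  define c where "c = Ex p Xi L"
  have "Var p Xi L = Ex p Xi (\<lambda>y. (L y * L y - 2 * c * L y) + c^2 * 1)"
    unfolding Var_def c_def[symmetric]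
    by (rule Ex_cong[OF Xi_meas]) (simp add: power2_eq_square algebra_simps)
  also have "\<dots> = Ex p Xi (\<lambda>y. L y * L y - 2 * c * L y) + Ex p Xi (\<lambda>y. c^2 * 1)"
    by (rule Ex_add) (use assms Gi_one Gi_cmult[OF Gi_one, of "c^2"] in \<open>auto intro: Gi_diff Gi_cmult\<close>)
  also have "Ex p Xi (\<lambda>y. L y * L y - 2 * c * L y) = Ex p Xi (\<lambda>y. L y * L y) - Ex p Xi (\<lambda>y. (2 * c) * L y)"
    by (rule Ex_diff) (use assms in \<open>auto intro: Gi_cmult\<close>)
  also have "Ex p Xi (\<lambda>y. c^2 * 1) = c^2" by (simp only: Ex_cmult Ex_one)
  also have "Ex p Xi (\<lambda>y. (2 * c) * L y) = 2 * c * c" by (simp only: Ex_cmult c_def)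
  finally show ?thesis by (simp add: c_def power2_eq_square)
qed

end


lemma dual_norm_props:
  assumes N0: "\<forall>v\<in>Xb. 0 \<le> normXb p Xi v"
    and K: "\<forall>v\<in>Xb. \<bar>F v\<bar> \<le> K * normXb p Xi v"
  shows "0 \<le> dual_norm p Xi Xb F"
    and "v \<in> Xb \<Longrightarrow> \<bar>F v\<bar> \<le> dual_norm p Xi Xb F * normXb p Xi v"
proof -
  let ?S = "insert 0 ((\<lambda>v. \<bar>F v\<bar> / normXb p Xi v) ` {v\<in>Xb. normXb p Xi v \<noteq> 0})"
  have bdd: "bdd_above ?S"
  proof (rule bdd_aboveI[where M="max K 0"])
    fix x assume "x \<in> ?S"
    then consider "x = 0" | v where "v \<in> Xb" "normXb p Xi v \<noteq> 0" "x = \<bar>F v\<bar> / normXb p Xi v" by auto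
    then show "x \<le> max K 0"
    proof cases
      case 2
      then have "normXb p Xi v > 0" using N0 by force
      moreover have "K * normXb p Xi v \<le> max K 0 * normXb p Xi v"
        using \<open>normXb p Xi v > 0\<close> by (intro mult_right_mono) auto
      moreover have "\<bar>F v\<bar> \<le> K * normXb p Xi v" using 2 K by auto
      ultimately have "\<bar>F v\<bar> \<le> max K 0 * normXb p Xi v" by linarith
      then show ?thesis using 2 \<open>normXb p Xi v > 0\<close> by (simp add: divide_le_eq)
    qed simp
  qed
  show D0: "0 \<le> dual_norm p Xi Xb F" unfolding dual_norm_def
    by (rule cSup_upper[OF _ bdd]) simp
  assume v: "v \<in> Xb"
  show "\<bar>F v\<bar> \<le> dual_norm p Xi Xb F * normXb p Xi v"
  proof (cases "normXb p Xi v = 0")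
    case True then show ?thesis using K v by force
  next
    case False
    then have pos: "normXb p Xi v > 0" using N0 v by force
    have "\<bar>F v\<bar> / normXb p Xi v \<le> dual_norm p Xi Xb F" unfolding dual_norm_def
      by (rule cSup_upper[OF _ bdd]) (use v False in auto)
    then show ?thesis using pos by (simp add: divide_le_eq)
  qed
qed

lemma gamma_props:
  assumes N0: "\<forall>v\<in>Xb. 0 \<le> normXb p Xi v"
    and K: "\<forall>w\<in>Xb. \<forall>v\<in>Xb. \<bar>Ell p Xi l w v\<bar> \<le> K * normXb p Xi w * normXb p Xi v"
    and e: "e \<in> Xb" "normXb p Xi e \<noteq> 0"
    and E0: "0 \<le> Ell p Xi l e e"
  shows "Ell p Xi l e e \<le> gamma2_bar p Xi Xb l * (normXb p Xi e)^2" "0 \<le> gamma2_bar p Xi Xb l"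
proof -
  let ?T = "{v\<in>Xb. normXb p Xi v \<noteq> 0} \<times> {v\<in>Xb. normXb p Xi v \<noteq> 0}"
  let ?g = "\<lambda>wv. Ell p Xi l (fst wv) (snd wv) / (normXb p Xi (fst wv) * normXb p Xi (snd wv))"
  have bdd: "bdd_above (?g ` ?T)"
  proof (rule bdd_aboveI[where M="K"])
    fix x assume "x \<in> ?g ` ?T"
    then obtain w v where wv: "w \<in> Xb" "v \<in> Xb" "normXb p Xi w \<noteq> 0" "normXb p Xi v \<noteq> 0"
      and x: "x = Ell p Xi l w v / (normXb p Xi w * normXb p Xi v)" by auto
    have "normXb p Xi w * normXb p Xi v > 0" using wv N0 by (metis mult_pos_pos order_le_less)
    moreover have "Ell p Xi l w v \<le> K * (normXb p Xi w * normXb p Xi v)"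
      using K wv by (metis abs_le_D1 mult.assoc)
    ultimately show "x \<le> K" using x by (simp add: divide_le_eq)
  qed
  have pos: "normXb p Xi e > 0" using N0 e by force
  have "?g (e, e) \<le> gamma2_bar p Xi Xb l" unfolding gamma2_bar_def
    by (rule cSUP_upper[OF _ bdd]) (use e in auto)
  then have h: "Ell p Xi l e e / (normXb p Xi e * normXb p Xi e) \<le> gamma2_bar p Xi Xb l" by simp
  then show "Ell p Xi l e e \<le> gamma2_bar p Xi Xb l * (normXb p Xi e)^2"
    using pos by (simp add: divide_le_eq power2_eq_square)
  show "0 \<le> gamma2_bar p Xi Xb l" using h E0 pos
    by (meson divide_nonneg_pos mult_pos_pos order_trans)
qed

lemma alpha_props:
  assumes c: "\<forall>v\<in>Xb. c * (normXb p Xi v)^2 \<le> abar p Xi a v v"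
    and e: "e \<in> Xb" "normXb p Xi e \<noteq> 0"
  shows "c \<le> alpha_bar p Xi Xb a"
    "alpha_bar p Xi Xb a * (normXb p Xi e)^2 \<le> abar p Xi a e e"
proof -
  let ?T = "{v\<in>Xb. normXb p Xi v \<noteq> 0}"
  let ?g = "\<lambda>v. abar p Xi a v v / (normXb p Xi v)^2"
  have lb: "c \<le> ?g v" if "v \<in> ?T" for v
    using c that by (simp add: le_divide_eq)
  show "c \<le> alpha_bar p Xi Xb a" unfolding alpha_bar_def
    by (rule cINF_greatest) (use e lb in auto)
  have bdd: "bdd_below (?g ` ?T)" by (rule bdd_belowI[where m=c]) (use lb in auto)
  have "alpha_bar p Xi Xb a \<le> ?g e" unfolding alpha_bar_def
    by (rule cINF_lower[OF bdd]) (use e in auto)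
  then show "alpha_bar p Xi Xb a * (normXb p Xi e)^2 \<le> abar p Xi a e e"
    using e by (simp add: le_divide_eq)
qed


theorem mainTheorem6:
  fixes p :: "real^'k::finite \<Rightarrow> real" and Xi :: "(real^'k) set"
    and q :: "'k \<Rightarrow> real \<Rightarrow> real"
    and m :: nat and b :: "nat \<Rightarrow> real^'k \<Rightarrow> real"
    and Xb :: "(real^'k \<Rightarrow> 'x::{real_inner, polish_space}) set"
    and a :: "'x \<Rightarrow> 'x \<Rightarrow> real^'k \<Rightarrow> real"
    and f l :: "'x \<Rightarrow> real^'k \<Rightarrow> real"
    and XR XR1 XR2 XR3 :: "(real^'k \<Rightarrow> 'x) set"
    and u uR u1 u2 u3 :: "real^'k \<Rightarrow> 'x"
    and r r1 r2 r3 :: "(real^'k \<Rightarrow> 'x) \<Rightarrow> real"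
  assumes Xi_meas: "Xi \<in> sets lborel"
    and p_meas: "p \<in> borel_measurable borel"
    and p_nonneg: "\<forall>y. 0 \<le> p y"
    and p_int: "set_integrable lborel Xi p"
    and p_prob: "(LINT y:Xi|lborel. p y) = 1"
    and p_indep: "\<forall>y\<in>Xi. p y = (\<Prod>i\<in>UNIV. q i (y $ i))"
    and b_meas: "\<forall>i<m. b i \<in> borel_measurable borel"
    and b_L2: "\<forall>i<m. set_integrable lborel Xi (\<lambda>y. (b i y)^2 * p y)"
    and Xb_def: "Xb = tensorSX (Sspace m b)"
    and a_bilin: "\<forall>y\<in>Xi. bounded_bilinear (\<lambda>x z. a x z y)"
    and a_bdd: "\<exists>C. \<forall>y\<in>Xi. \<forall>x z. \<bar>a x z y\<bar> \<le> C * norm x * norm z"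
    and a_coer: "\<exists>c>0. \<forall>y\<in>Xi. \<forall>x. c * (norm x)^2 \<le> a x x y"
    and a_meas: "\<forall>x z. set_borel_measurable lborel Xi (\<lambda>y. a x z y)"
    and f_lin: "\<forall>y\<in>Xi. bounded_linear (\<lambda>x. f x y)"
    and f_bdd: "\<exists>C. \<forall>y\<in>Xi. \<forall>x. \<bar>f x y\<bar> \<le> C * norm x"
    and f_meas: "\<forall>x. set_borel_measurable lborel Xi (\<lambda>y. f x y)"
    and l_lin: "\<forall>y\<in>Xi. bounded_linear (\<lambda>x. l x y)"
    and l_bdd: "\<exists>C. \<forall>y\<in>Xi. \<forall>x. \<bar>l x y\<bar> \<le> C * norm x"
    and l_meas: "\<forall>x. set_borel_measurable lborel Xi (\<lambda>y. l x y)"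
    and XR_sub: "lin_subspace_of XR Xb"
    and XR1_sub: "lin_subspace_of XR1 Xb"
    and XR2_sub: "lin_subspace_of XR2 Xb"
    and XR3_sub: "lin_subspace_of XR3 Xb"
    and u_sol: "u \<in> Xb" "\<forall>v\<in>Xb. abar p Xi a u v = fbar p Xi f v"
    and uR_sol: "uR \<in> XR" "\<forall>v\<in>XR. abar p Xi a uR v = fbar p Xi f v"
    and r_def: "r = (\<lambda>v. fbar p Xi f v - abar p Xi a uR v)"
    and u1_sol: "u1 \<in> XR1" "\<forall>v\<in>XR1. abar p Xi a v u1 = - fbar p Xi l v"
    and u2_sol: "u2 \<in> XR2" "\<forall>v\<in>XR2. abar p Xi a v u2 = - 2 * Ell p Xi l uR v"
    and u3_sol: "u3 \<in> XR3"
       "\<forall>v\<in>XR3. abar p Xi a v u3 = - 2 * (fbar p Xi l uR - r u1) * fbar p Xi l v"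
    and r1_def: "r1 = (\<lambda>v. - fbar p Xi l v - abar p Xi a v u1)"
    and r2_def: "r2 = (\<lambda>v. - 2 * Ell p Xi l uR v - abar p Xi a v u2)"
    and r3_def: "r3 = (\<lambda>v. - 2 * (fbar p Xi l uR - r u1) * fbar p Xi l v - abar p Xi a v u3)"
  shows "\<bar>Var p Xi (\<lambda>y. l (u y) y) - Var p Xi (\<lambda>y. l (uR y) y) - (r u1)^2 + r u2 - r u3\<bar>
     \<le> gamma2_bar p Xi Xb l * (dual_norm p Xi Xb r)^2 / (alpha_bar p Xi Xb a)^2
       + (dual_norm p Xi Xb r)^2 * (dual_norm p Xi Xb r1)^2 / (alpha_bar p Xi Xb a)^2
       + dual_norm p Xi Xb (\<lambda>v. r2 v - r3 v) * dual_norm p Xi Xb r / alpha_bar p Xi Xb a"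
proof -
  interpret W: wset p Xi m b by unfold_locales (use assms in auto)
  have N0: "\<forall>v. 0 \<le> normXb p Xi v"
    unfolding normXb_def by (auto intro!: Ex_nonneg simp: p_nonneg)
  obtain Ca where Ca0: "Ca \<ge> 0" and Ca: "\<forall>y\<in>Xi. \<forall>x z. \<bar>a x z y\<bar> \<le> Ca * norm x * norm z"
  proof -
    obtain C where C: "\<forall>y\<in>Xi. \<forall>x z. \<bar>a x z y\<bar> \<le> C * norm x * norm z" using a_bdd by blast
    have "\<forall>y\<in>Xi. \<forall>x z. \<bar>a x z y\<bar> \<le> \<bar>C\<bar> * norm x * norm z"
    proof (intro ballI allI)
      fix y x z assume "y \<in> Xi"
      then have "\<bar>a x z y\<bar> \<le> C * (norm x * norm z)" using C by (simp add: mult.assoc)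
      also have "\<dots> \<le> \<bar>C\<bar> * (norm x * norm z)" by (intro mult_right_mono) auto
      finally show "\<bar>a x z y\<bar> \<le> \<bar>C\<bar> * norm x * norm z" by (simp add: mult.assoc)
    qed
    then show ?thesis using that by (meson abs_ge_zero)
  qed
  obtain Cl where Cl0: "Cl \<ge> 0" and Cl: "\<forall>y\<in>Xi. \<forall>x. \<bar>l x y\<bar> \<le> Cl * norm x"
  proof -
    obtain C where C: "\<forall>y\<in>Xi. \<forall>x. \<bar>l x y\<bar> \<le> C * norm x" using l_bdd by blast
    have "\<forall>y\<in>Xi. \<forall>x. \<bar>l x y\<bar> \<le> \<bar>C\<bar> * norm x"
    proof (intro ballI allI)
      fix y x assume "y \<in> Xi"
      then have "\<bar>l x y\<bar> \<le> C * norm x" using C by simp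
      also have "\<dots> \<le> \<bar>C\<bar> * norm x" by (intro mult_right_mono) auto
      finally show "\<bar>l x y\<bar> \<le> \<bar>C\<bar> * norm x" .
    qed
    then show ?thesis using that by (meson abs_ge_zero)
  qed
  obtain Cf where Cf: "\<forall>y\<in>Xi. \<forall>x. \<bar>f x y\<bar> \<le> Cf * norm x" using f_bdd by blast
  obtain c where c0: "c > 0" and coer: "\<forall>y\<in>Xi. \<forall>x. c * (norm x)^2 \<le> a x x y" using a_coer by blast
  define V where "V = (\<lambda>(z::nat \<Rightarrow> 'x) y. \<Sum>j<m. b j y *\<^sub>R z j)"
  have Xb_iff: "v \<in> Xb \<longleftrightarrow> (\<exists>z. v = V z)" for v
  proof
    assume "v \<in> Xb"
    then have "\<exists>(n::nat) s x. (\<forall>i<n. s i \<in> Sspace m b) \<and> v = (\<lambda>y. \<Sum>i<n. s i y *\<^sub>R x i)"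
      unfolding Xb_def tensorSX_def by (simp only: mem_Collect_eq)
    then obtain n :: nat and s x where s: "\<forall>i<n. s i \<in> Sspace m b" and v: "v = (\<lambda>y. \<Sum>i<n. s i y *\<^sub>R x i)"
      by blast
    have "\<forall>i<n. \<exists>cc. s i = (\<lambda>y. \<Sum>j<m. cc j * b j y)" using s unfolding Sspace_def by blast
    then obtain C where C: "\<forall>i<n. s i = (\<lambda>y. \<Sum>j<m. C i j * b j y)" by metis
    have "v = V (\<lambda>j. \<Sum>i<n. C i j *\<^sub>R x i)"
    proof
      fix y
      have "v y = (\<Sum>i<n. (\<Sum>j<m. C i j * b j y) *\<^sub>R x i)" using v C by simp
      also have "\<dots> = (\<Sum>i<n. \<Sum>j<m. b j y *\<^sub>R (C i j *\<^sub>R x i))" by (simp add: scaleR_sum_left mult.commute)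
      also have "\<dots> = (\<Sum>j<m. \<Sum>i<n. b j y *\<^sub>R (C i j *\<^sub>R x i))" by (rule sum.swap)
      also have "\<dots> = V (\<lambda>j. \<Sum>i<n. C i j *\<^sub>R x i) y" by (simp add: V_def scaleR_sum_right)
      finally show "v y = V (\<lambda>j. \<Sum>i<n. C i j *\<^sub>R x i) y" .
    qed
    then show "\<exists>z. v = V z" by blast
  next
    assume "\<exists>z. v = V z"
    then obtain z where z: "v = V z" by blast
    have "\<forall>i<m. b i \<in> Sspace m b"
    proof (intro allI impI)
      fix i assume i: "i < m"
      have eq: "(\<lambda>y. \<Sum>j<m. (if j = i then 1 else 0) * b j y) = (\<lambda>y. \<Sum>j<m. if j = i then b j y else 0)"
        by (intro ext sum.cong) auto
      have "b i = (\<lambda>y. \<Sum>j<m. (if j = i then 1 else 0) * b j y)"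
        unfolding eq using i by (simp add: sum.delta)
      then show "b i \<in> Sspace m b" unfolding Sspace_def mem_Collect_eq
        by (rule exI[where x="\<lambda>j. if j = i then 1 else 0"])
    qed
    then show "v \<in> Xb" unfolding Xb_def tensorSX_def mem_Collect_eq
      by (intro exI[of _ m] exI[of _ b] exI[of _ z] conjI) (auto simp: z V_def)
  qed
  have V_diff: "(\<lambda>y. V z y - V z' y) = V (\<lambda>j. z j - z' j)" for z z'
    by (simp add: V_def fun_eq_iff sum_subtractf scaleR_diff_right)
  have Xb_diff: "(\<lambda>y. w y - v y) \<in> Xb" if wvX: "w \<in> Xb" "v \<in> Xb" for w v
  proof -
    obtain z z' where "w = V z" "v = V z'" using wvX Xb_iff by blast
    then show ?thesis using V_diff Xb_iff by auto
  qed
  have GA: "Gi p Xi (\<lambda>y. a (w y) (v y) y)" if wvX: "w \<in> Xb" "v \<in> Xb" for w v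
  proof -
    obtain z z' where wv: "w = V z'" "v = V z" using wvX Xb_iff by blast
    show ?thesis unfolding wv V_def
      by (rule W.Gi_bilin[where C=Ca]) (use a_bilin a_meas Ca in auto)
  qed
  have GF: "Gi p Xi (\<lambda>y. f (v y) y)" if vX: "v \<in> Xb" for v
  proof -
    obtain z where wv: "v = V z" using vX Xb_iff by blast
    show ?thesis unfolding wv V_def
      by (rule W.Gi_lin[where C=Cf]) (use f_lin f_meas Cf in auto)
  qed
  have GL: "Gi p Xi (\<lambda>y. l (v y) y)" if vX: "v \<in> Xb" for v
  proof -
    obtain z where wv: "v = V z" using vX Xb_iff by blast
    show ?thesis unfolding wv V_def
      by (rule W.Gi_lin[where C=Cl]) (use l_lin l_meas Cl in auto)
  qed
  have GLL: "Gi p Xi (\<lambda>y. l (w y) y * l (v y) y)" if wvX: "w \<in> Xb" "v \<in> Xb" for w v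
  proof -
    obtain z z' where wv: "w = V z'" "v = V z" using wvX Xb_iff by blast
    have bb: "\<forall>y\<in>Xi. bounded_bilinear (\<lambda>x z. l x y * l z y)"
      using l_lin bounded_bilinear.comp[OF bounded_bilinear_mult] by blast
    have lm: "\<forall>x z. set_borel_measurable lborel Xi (\<lambda>y. l x y * l z y)"
    proof (intro allI)
      fix x z
      have "(\<lambda>y. indicator Xi y *\<^sub>R (l x y * l z y)) = (\<lambda>y. (indicator Xi y *\<^sub>R l x y) * (indicator Xi y *\<^sub>R l z y))"
        by (auto simp: fun_eq_iff indicator_def)
      moreover have "(\<lambda>y. (indicator Xi y *\<^sub>R l x y) * (indicator Xi y *\<^sub>R l z y)) \<in> borel_measurable lborel"
        using l_meas unfolding set_borel_measurable_def by (intro borel_measurable_times) auto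
      ultimately show "set_borel_measurable lborel Xi (\<lambda>y. l x y * l z y)"
        unfolding set_borel_measurable_def by simp
    qed
    have lb: "\<forall>y\<in>Xi. \<forall>x z. \<bar>l x y * l z y\<bar> \<le> (Cl * Cl) * norm x * norm z"
    proof (intro ballI allI)
      fix y x z assume y: "y \<in> Xi"
      have "\<bar>l x y\<bar> * \<bar>l z y\<bar> \<le> (Cl * norm x) * (Cl * norm z)"
        using Cl y Cl0 by (intro mult_mono) auto
      then show "\<bar>l x y * l z y\<bar> \<le> (Cl * Cl) * norm x * norm z" by (simp add: abs_mult mult_ac)
    qed
    show ?thesis unfolding wv V_def by (rule W.Gi_bilin[OF bb lm lb])
  qed
  have GN: "Gi p Xi (\<lambda>y. (norm (v y))^2)" if vX: "v \<in> Xb" for v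
  proof -
    obtain z where v: "v = V z" using vX Xb_iff by blast
    have bb: "\<forall>y\<in>Xi. bounded_bilinear (\<lambda>x z. inner x z :: real)" using bounded_bilinear_inner by blast
    have im: "\<forall>x z. set_borel_measurable lborel Xi (\<lambda>y. inner x z :: real)"
      unfolding set_borel_measurable_def by (intro allI) measurable
    have ib: "\<forall>y\<in>Xi. \<forall>x z::'x. \<bar>inner x z\<bar> \<le> 1 * norm x * norm z"
      by (simp add: Cauchy_Schwarz_ineq2)
    have "Gi p Xi (\<lambda>y. inner (V z y) (V z y))"
      unfolding V_def by (rule W.Gi_bilin[OF bb im ib])
    then show ?thesis unfolding v by (simp add: power2_norm_eq_inner)
  qed

  have normX: "normXb p Xi v = sqrt (Ex p Xi (\<lambda>y. (norm (v y))^2))" for v by (simp add: normXb_def)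
  have Nsq: "(normXb p Xi v)^2 = Ex p Xi (\<lambda>y. (norm (v y))^2)" for v
    unfolding normXb_def by (rule real_sqrt_pow2) (rule Ex_nonneg, use p_nonneg in auto)
  have Ab: "\<bar>abar p Xi a w v\<bar> \<le> Ca * normXb p Xi w * normXb p Xi v" if wvX: "w \<in> Xb" "v \<in> Xb" for w v
    unfolding abar_def normX
    by (rule Ex_CS[OF p_nonneg GA[OF wvX] GN[OF wvX(1)] GN[OF wvX(2)]]) (use Ca Ca0 in auto)
  have Lb: "\<bar>fbar p Xi l v\<bar> \<le> Cl * normXb p Xi v" if vX: "v \<in> Xb" for v
  proof -
    have "\<bar>fbar p Xi l v\<bar> \<le> Cl * sqrt (Ex p Xi (\<lambda>y. (norm (v y))^2)) * sqrt (Ex p Xi (\<lambda>y. (1::real)^2))"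
      unfolding fbar_def
      by (rule Ex_CS[OF p_nonneg GL[OF vX] GN[OF vX]]) (use Cl Cl0 W.Gi_one in auto)
    then show ?thesis by (simp add: W.Ex_one normX)
  qed
  have LLb: "\<bar>Ell p Xi l w v\<bar> \<le> (Cl * Cl) * normXb p Xi w * normXb p Xi v" if wvX: "w \<in> Xb" "v \<in> Xb" for w v
    unfolding Ell_def normX
  proof (rule Ex_CS[OF p_nonneg GLL[OF wvX] GN[OF wvX(1)] GN[OF wvX(2)]])
    fix y assume y: "y \<in> Xi"
    have "\<bar>l (w y) y\<bar> * \<bar>l (v y) y\<bar> \<le> (Cl * norm (w y)) * (Cl * norm (v y))"
      using Cl y Cl0 by (intro mult_mono) auto
    then show "\<bar>l (w y) y * l (v y) y\<bar> \<le> Cl * Cl * norm (w y) * norm (v y)" by (simp add: abs_mult mult_ac)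
  qed (use Cl0 in auto)
  have coerc: "c * (normXb p Xi v)^2 \<le> abar p Xi a v v" if vX: "v \<in> Xb" for v
  proof -
    have "c * (normXb p Xi v)^2 = Ex p Xi (\<lambda>y. c * (norm (v y))^2)" by (simp add: Nsq Ex_cmult)
    also have "\<dots> \<le> abar p Xi a v v" unfolding abar_def
      by (rule Ex_mono[OF p_nonneg]) (use GA[OF vX vX] GN[OF vX] coer in \<open>auto intro: Gi_cmult\<close>)
    finally show ?thesis .
  qed
  have Enn: "0 \<le> Ell p Xi l v v" for v
    unfolding Ell_def by (rule Ex_nonneg[OF p_nonneg]) simp
  define e where "e = (\<lambda>y. u y - uR y)"
  have sub: "XR \<subseteq> Xb" "XR1 \<subseteq> Xb" "XR2 \<subseteq> Xb" "XR3 \<subseteq> Xb"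
    using XR_sub XR1_sub XR2_sub XR3_sub by (auto simp: lin_subspace_of_def)
  have uRX: "uR \<in> Xb" and u1X: "u1 \<in> Xb" and u2X: "u2 \<in> Xb" and u3X: "u3 \<in> Xb"
    using sub uR_sol(1) u1_sol(1) u2_sol(1) u3_sol(1) by auto
  have uX: "u \<in> Xb" by (rule u_sol(1))
  have eX: "e \<in> Xb" unfolding e_def by (rule Xb_diff[OF uX uRX])
  have ue: "u y = e y + uR y" for y by (simp add: e_def)
  have r_eq: "r v = abar p Xi a e v" if vX: "v \<in> Xb" for v
  proof -
    have "r v = abar p Xi a u v - abar p Xi a uR v" using u_sol(2) vX by (simp add: r_def)
    also have "\<dots> = Ex p Xi (\<lambda>y. a (u y) (v y) y - a (uR y) (v y) y)"
      unfolding abar_def by (rule Ex_diff[symmetric]) (rule GA[OF uX vX], rule GA[OF uRX vX])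
    also have "\<dots> = abar p Xi a e v" unfolding abar_def
    proof (rule Ex_cong[OF Xi_meas])
      fix y assume y: "y \<in> Xi"
      interpret BB: bounded_bilinear "\<lambda>x z. a x z y" using a_bilin y by auto
      show "a (u y) (v y) y - a (uR y) (v y) y = a (e y) (v y) y" by (simp add: e_def BB.diff_left)
    qed
    finally show ?thesis .
  qed
  have Lu: "l (u y) y = l (e y) y + l (uR y) y" if y: "y \<in> Xi" for y
  proof -
    interpret L: bounded_linear "\<lambda>x. l x y" using l_lin y by auto
    show ?thesis unfolding ue by (rule L.add)
  qed
  have Fsplit: "fbar p Xi l u = fbar p Xi l e + fbar p Xi l uR"
  proof -
    have "fbar p Xi l u = Ex p Xi (\<lambda>y. l (e y) y + l (uR y) y)"
      unfolding fbar_def by (rule Ex_cong[OF Xi_meas]) (rule Lu)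
    also have "\<dots> = fbar p Xi l e + fbar p Xi l uR"
      unfolding fbar_def by (rule Ex_add) (rule GL[OF eX], rule GL[OF uRX])
    finally show ?thesis .
  qed
  have Lsplit: "Ell p Xi l u u = Ell p Xi l e e + 2 * Ell p Xi l uR e + Ell p Xi l uR uR"
  proof -
    have "Ell p Xi l u u = Ex p Xi (\<lambda>y. (l (e y) y * l (e y) y + 2 * (l (uR y) y * l (e y) y)) + l (uR y) y * l (uR y) y)"
      unfolding Ell_def by (rule Ex_cong[OF Xi_meas]) (simp add: Lu algebra_simps)
    also have "\<dots> = Ex p Xi (\<lambda>y. l (e y) y * l (e y) y + 2 * (l (uR y) y * l (uR y) y * 0 + l (uR y) y * l (e y) y)) + Ell p Xi l uR uR"
      unfolding Ell_def
      by (subst Ex_add) (auto intro!: Gi_add Gi_cmult GLL eX uRX)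
    also have "Ex p Xi (\<lambda>y. l (e y) y * l (e y) y + 2 * (l (uR y) y * l (uR y) y * 0 + l (uR y) y * l (e y) y))
        = Ell p Xi l e e + 2 * Ell p Xi l uR e"
      unfolding Ell_def
      by (subst Ex_add) (auto intro!: Gi_add Gi_cmult GLL eX uRX simp: Ex_cmult)
    finally show ?thesis .
  qed
  have VarU: "Var p Xi (\<lambda>y. l (u y) y) = Ell p Xi l e e + 2 * Ell p Xi l uR e + Ell p Xi l uR uR
      - (fbar p Xi l e + fbar p Xi l uR)^2"
    using W.Var_eq[OF GL[OF uX] GLL[OF uX uX]] Lsplit Fsplit by (simp add: Ell_def fbar_def)
  have VarR: "Var p Xi (\<lambda>y. l (uR y) y) = Ell p Xi l uR uR - (fbar p Xi l uR)^2"
    using W.Var_eq[OF GL[OF uRX] GLL[OF uRX uRX]] by (simp add: Ell_def fbar_def)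
  have key: "Var p Xi (\<lambda>y. l (u y) y) - Var p Xi (\<lambda>y. l (uR y) y) - (r u1)^2 + r u2 - r u3
      = Ell p Xi l e e - (r1 e)^2 - (r2 e - r3 e)"
    unfolding VarU VarR r1_def r2_def r3_def r_eq[OF u1X] r_eq[OF u2X] r_eq[OF u3X]
    by (simp add: power2_eq_square algebra_simps)
  let ?N = "normXb p Xi"
  have Nge: "\<forall>v\<in>Xb. 0 \<le> ?N v" using N0 by auto
  have rB: "\<forall>v\<in>Xb. \<bar>r v\<bar> \<le> (Ca * ?N e) * ?N v"
    using r_eq Ab[OF eX] by (simp add: mult.assoc)
  have r1B: "\<forall>v\<in>Xb. \<bar>r1 v\<bar> \<le> (Cl + Ca * ?N u1) * ?N v"
  proof
    fix v assume vX: "v \<in> Xb"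
    have "\<bar>r1 v\<bar> \<le> \<bar>fbar p Xi l v\<bar> + \<bar>abar p Xi a v u1\<bar>" unfolding r1_def by simp
    also have "\<dots> \<le> Cl * ?N v + Ca * ?N v * ?N u1" using Lb[OF vX] Ab[OF vX u1X] by linarith
    finally show "\<bar>r1 v\<bar> \<le> (Cl + Ca * ?N u1) * ?N v" by (simp add: algebra_simps)
  qed
  define D where "D = fbar p Xi l uR - r u1"
  have r23B: "\<forall>v\<in>Xb. \<bar>r2 v - r3 v\<bar> \<le> (2 * (Cl * Cl) * ?N uR + Ca * ?N u2 + 2 * \<bar>D\<bar> * Cl + Ca * ?N u3) * ?N v"
  proof
    fix v assume vX: "v \<in> Xb"
    have eq: "r2 v - r3 v = - 2 * Ell p Xi l uR v - abar p Xi a v u2 + 2 * (D * fbar p Xi l v) + abar p Xi a v u3"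
      unfolding r2_def r3_def D_def by (simp add: algebra_simps)
    have h3: "\<bar>D * fbar p Xi l v\<bar> \<le> \<bar>D\<bar> * (Cl * ?N v)"
      unfolding abs_mult by (rule mult_left_mono[OF Lb[OF vX]]) simp
    have "\<bar>r2 v - r3 v\<bar> \<le> 2 * \<bar>Ell p Xi l uR v\<bar> + \<bar>abar p Xi a v u2\<bar> + 2 * \<bar>D * fbar p Xi l v\<bar> + \<bar>abar p Xi a v u3\<bar>"
      unfolding eq by linarith
    also have "\<dots> \<le> 2 * ((Cl * Cl) * ?N uR * ?N v) + Ca * ?N v * ?N u2 + 2 * (\<bar>D\<bar> * (Cl * ?N v)) + Ca * ?N v * ?N u3"
      using LLb[OF uRX vX] Ab[OF vX u2X] Ab[OF vX u3X] h3 by linarith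
    finally show "\<bar>r2 v - r3 v\<bar> \<le> (2 * (Cl * Cl) * ?N uR + Ca * ?N u2 + 2 * \<bar>D\<bar> * Cl + Ca * ?N u3) * ?N v"
      by (simp add: algebra_simps)
  qed
  define Dr where "Dr = dual_norm p Xi Xb r"
  define D1 where "D1 = dual_norm p Xi Xb r1"
  define D23 where "D23 = dual_norm p Xi Xb (\<lambda>v. r2 v - r3 v)"
  define Ne where "Ne = ?N e"
  define E2 where "E2 = Ell p Xi l e e"
  have Dr0: "0 \<le> Dr" and Dre: "\<bar>r e\<bar> \<le> Dr * Ne"
    using dual_norm_props[OF Nge rB] eX unfolding Dr_def Ne_def by auto
  have D10: "0 \<le> D1" and D1e: "\<bar>r1 e\<bar> \<le> D1 * Ne"
    using dual_norm_props[OF Nge r1B] eX unfolding D1_def Ne_def by auto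
  have D230: "0 \<le> D23" and D23e: "\<bar>r2 e - r3 e\<bar> \<le> D23 * Ne"
    using dual_norm_props[OF Nge r23B] eX unfolding D23_def Ne_def by auto
  have Ne0: "0 \<le> Ne" unfolding Ne_def using N0 by auto
  have E20: "0 \<le> E2" unfolding E2_def by (rule Enn)
  have E2le: "E2 \<le> (Cl * Cl) * Ne * Ne" using LLb[OF eX eX] unfolding E2_def Ne_def by linarith
  have lhs: "\<bar>Var p Xi (\<lambda>y. l (u y) y) - Var p Xi (\<lambda>y. l (uR y) y) - (r u1)^2 + r u2 - r u3\<bar>
      \<le> E2 + (r1 e)^2 + \<bar>r2 e - r3 e\<bar>"
    unfolding key E2_def using Enn[of e] zero_le_power2[of "r1 e"] by linarith
  have r1sq: "(r1 e)^2 \<le> D1^2 * Ne^2"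
  proof -
    have "\<bar>r1 e\<bar>^2 \<le> (D1 * Ne)^2" by (rule power_mono[OF D1e]) simp
    then show ?thesis by (simp add: power_mult_distrib)
  qed
  show ?thesis
  proof (cases "\<exists>v\<in>Xb. ?N v \<noteq> 0")
    case False
    then have "Ne = 0" unfolding Ne_def using eX by auto
    have emp: "{v \<in> Xb. ?N v \<noteq> 0} = {}" using False by auto
    have "dual_norm p Xi Xb r = 0" unfolding dual_norm_def emp by simp
    moreover have "E2 = 0" using E2le E20 \<open>Ne = 0\<close> by simp
    moreover have "(r1 e)^2 = 0" using r1sq \<open>Ne = 0\<close> by (simp)
    moreover have "\<bar>r2 e - r3 e\<bar> = 0" using D23e \<open>Ne = 0\<close> by simp
    ultimately show ?thesis using lhs by simp
  next
    case True
    then obtain v0 where v0: "v0 \<in> Xb" "?N v0 \<noteq> 0" by blast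
    define al where "al = alpha_bar p Xi Xb a"
    define ga where "ga = gamma2_bar p Xi Xb l"
    have coerc': "\<forall>v\<in>Xb. c * (?N v)^2 \<le> abar p Xi a v v" using coerc by blast
    have LLb': "\<forall>w\<in>Xb. \<forall>v\<in>Xb. \<bar>Ell p Xi l w v\<bar> \<le> (Cl * Cl) * ?N w * ?N v" using LLb by blast
    have al: "al > 0" using alpha_props(1)[OF coerc' v0] c0 unfolding al_def by linarith
    have ga0: "0 \<le> ga" using gamma_props(2)[OF Nge LLb' v0 Enn] unfolding ga_def .
    have E2g: "E2 \<le> ga * Ne^2"
    proof (cases "Ne = 0")
      case True then show ?thesis using E2le by simp
    next
      case False then show ?thesis
        using gamma_props(1)[OF Nge LLb' eX _ Enn] unfolding ga_def E2_def Ne_def by auto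
    qed
    have NeB: "Ne \<le> Dr / al"
    proof (cases "Ne = 0")
      case True then show ?thesis using Dr0 al by simp
    next
      case False
      then have Nep: "Ne > 0" using Ne0 by simp
      have "al * Ne^2 \<le> abar p Xi a e e"
        using alpha_props(2)[OF coerc' eX] False unfolding al_def Ne_def by auto
      also have "\<dots> = r e" using r_eq[OF eX] by simp
      also have "\<dots> \<le> Dr * Ne" using Dre by linarith
      finally have "al * Ne * Ne \<le> Dr * Ne" by (simp add: power2_eq_square mult.assoc)
      then have "al * Ne \<le> Dr" using Nep by simp
      then show ?thesis using al by (simp add: le_divide_eq mult.commute)
    qed
    have NeB2: "Ne^2 \<le> (Dr / al)^2" by (rule power_mono[OF NeB Ne0])
    have "E2 + (r1 e)^2 + \<bar>r2 e - r3 e\<bar> \<le> ga * Ne^2 + D1^2 * Ne^2 + D23 * Ne"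
      using E2g r1sq D23e by linarith
    also have "\<dots> \<le> ga * (Dr / al)^2 + D1^2 * (Dr / al)^2 + D23 * (Dr / al)"
      using NeB2 NeB ga0 D230 by (intro add_mono mult_left_mono) auto
    also have "\<dots> = ga * Dr^2 / al^2 + Dr^2 * D1^2 / al^2 + D23 * Dr / al"
      by (simp add: power_divide)
    finally show ?thesis using lhs unfolding ga_def al_def Dr_def D1_def D23_def by linarith
  qed
qed

end
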